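(* Let $n \ge 2$. Let $\mathcal{W}_n$ be the set of weighted graphs on $n$ vertices with weights in $[0,1]$, identified with their weighted adjacency matrices, i.e. the set of $n\times n$ real symmetric matrices with all entries in $[0,1]$. Let $\mathcal{G}_n$ be the set of (unweighted, simple) graphs on $n$ vertices. Then \[ \min_{G \in \mathcal{G}_n} \lambda_{n-1}(G) - 2\sqrt{n} \le \inf_{G\in \mathcal{W}_n} \lambda_{n-1}(G). \]
   Context: For a real symmetric $n\times n$ matrix $M$ (in particular the adjacency matrix of a graph or weighted graph), $\lambda_k(M)$ denotes its $k$-th largest eigenvalue, counted with multiplicity, so $\lambda_1 \ge \lambda_2 \ge \dots \ge \lambda_n$. Weighted graphs may have loops (diagonal entries in $[0,1]$). *)

theory Defs
  imports "Jordan_Normal_Form.Char_Poly" "HOL-Computational_Algebra.Polynomial"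
begin

text \<open>Eigenvalues of a square real matrix, counted with multiplicity, are the roots
  of its characteristic polynomial (with multiplicity).  For a real symmetric matrix
  the characteristic polynomial splits over the reals, so this multiset has exactly
  n elements.\<close>
definition eigenvalues_desc :: "real mat \<Rightarrow> real list" where
  "eigenvalues_desc A = rev (sorted_list_of_multiset (proots (char_poly A)))"

text \<open>k-th largest eigenvalue (1-based): lambda_1 >= lambda_2 >= ... >= lambda_n.\<close>
definition lambda_k :: "real mat \<Rightarrow> nat \<Rightarrow> real" where
  "lambda_k A k = eigenvalues_desc A ! (k - 1)"

definition weighted_graphs :: "nat \<Rightarrow> real mat set" where
  "weighted_graphs n = {A. A \<in> carrier_mat n n \<and> A\<^sup>T = A \<and>
      (\<forall>i<n. \<forall>j<n. 0 \<le> A $$ (i,j) \<and> A $$ (i,j) \<le> 1)}"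

definition simple_graphs :: "nat \<Rightarrow> real mat set" where
  "simple_graphs n = {A. A \<in> carrier_mat n n \<and> A\<^sup>T = A \<and>
      (\<forall>i<n. A $$ (i,i) = 0) \<and>
      (\<forall>i<n. \<forall>j<n. A $$ (i,j) = 0 \<or> A $$ (i,j) = 1)}"

end

theory Submission
  imports Defs "HOL-Analysis.Function_Topology"
begin


definition ip :: "nat \<Rightarrow> (nat \<Rightarrow> real) \<Rightarrow> (nat \<Rightarrow> real) \<Rightarrow> real" where
  "ip n x y = (\<Sum>i<n. x i * y i)"
definition mv :: "nat \<Rightarrow> real mat \<Rightarrow> (nat \<Rightarrow> real) \<Rightarrow> (nat \<Rightarrow> real)" where
  "mv n A x = (\<lambda>i. if i < n then (\<Sum>j<n. A $$ (i,j) * x j) else 0)"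
definition symm :: "nat \<Rightarrow> real mat \<Rightarrow> bool" where
  "symm n A = (\<forall>i<n. \<forall>j<n. A $$ (i,j) = A $$ (j,i))"
definition supp :: "nat \<Rightarrow> (nat \<Rightarrow> real) \<Rightarrow> bool" where
  "supp n x = (\<forall>i\<ge>n. x i = 0)"
definition qf :: "nat \<Rightarrow> real mat \<Rightarrow> (nat \<Rightarrow> real) \<Rightarrow> real" where
  "qf n A x = ip n x (mv n A x)"

lemma ip_sym: "ip n x y = ip n y x"
  unfolding ip_def by (simp add: mult.commute)

lemma ip_lin: "ip n (\<lambda>i. a * x i + b * y i) z = a * ip n x z + b * ip n y z"
  unfolding ip_def by (simp add: sum.distrib sum_distrib_left algebra_simps)

lemma ip_lin2: "ip n z (\<lambda>i. a * x i + b * y i) = a * ip n z x + b * ip n z y"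
  using ip_lin[of n a x b y z] by (simp add: ip_sym)

lemma ip_nonneg: "ip n x x \<ge> 0"
  unfolding ip_def by (intro sum_nonneg) auto

lemma ip_zero: "ip n x x = 0 \<Longrightarrow> i < n \<Longrightarrow> x i = 0"
  unfolding ip_def using sum_nonneg_eq_0_iff[of "{..<n}" "\<lambda>i. x i * x i"] by auto

lemma ip_cong: "(\<And>i. i < n \<Longrightarrow> x i = x' i) \<Longrightarrow> (\<And>i. i < n \<Longrightarrow> y i = y' i) \<Longrightarrow> ip n x y = ip n x' y'"
  unfolding ip_def by (intro sum.cong) auto

lemma mv_lin: "mv n A (\<lambda>i. a * x i + b * y i) = (\<lambda>i. a * mv n A x i + b * mv n A y i)"
  unfolding mv_def by (auto simp: sum.distrib sum_distrib_left algebra_simps)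

lemma mv_cong: "(\<And>i. i < n \<Longrightarrow> x i = x' i) \<Longrightarrow> mv n A x = mv n A x'"
  unfolding mv_def by (intro ext) auto

lemma selfadj: assumes "symm n A" shows "ip n x (mv n A y) = ip n (mv n A x) y"
proof -
  have "ip n x (mv n A y) = (\<Sum>i<n. \<Sum>j<n. x i * A $$ (i,j) * y j)"
    unfolding ip_def mv_def by (simp add: sum_distrib_left mult.assoc)
  also have "\<dots> = (\<Sum>j<n. \<Sum>i<n. x i * A $$ (i,j) * y j)" by (rule sum.swap)
  also have "\<dots> = ip n (mv n A x) y"
    unfolding ip_def mv_def using assms unfolding symm_def
    by (auto simp: sum_distrib_right intro!: sum.cong)
  finally show ?thesis .
qed

lemma homog_solution:
  fixes vs :: "nat \<Rightarrow> nat \<Rightarrow> real"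
  assumes "m < n"
  shows "\<exists>y. supp n y \<and> (\<forall>j<m. ip n y (vs j) = 0) \<and> ip n y y > 0"
proof -
  define c where "c = (\<lambda>j. vec n (\<lambda>i. if j < m then vs j i else 0))"
  define M where "M = mat\<^sub>r n n (\<lambda>j. if j = m then 0\<^sub>v n else c j)"
  have M: "M \<in> carrier_mat n n" unfolding M_def by auto
  have "det M = 0" unfolding M_def
    by (rule det_row_0[OF assms]) (auto simp: c_def)
  then obtain v where v: "v \<in> carrier_vec n" "v \<noteq> 0\<^sub>v n" "M *\<^sub>v v = 0\<^sub>v n"
    using det_0_iff_vec_prod_zero[OF M] by auto
  define y where "y = (\<lambda>i. if i < n then v $ i else 0)"
  have "supp n y" unfolding supp_def y_def by auto
  moreover have "ip n y (vs j) = 0" if j: "j < m" for j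
  proof -
    have "(M *\<^sub>v v) $ j = 0" using v j assms by auto
    moreover have "(M *\<^sub>v v) $ j = row M j \<bullet> v" using j assms M by auto
    moreover have "row M j = c j" unfolding M_def using j assms by (auto simp: c_def)
    moreover have "c j \<bullet> v = (\<Sum>i<n. vs j i * v $ i)"
      using j v unfolding c_def by (auto simp: scalar_prod_def atLeast0LessThan)
    ultimately show ?thesis unfolding ip_def y_def by (simp add: mult.commute)
  qed
  moreover have "ip n y y > 0"
  proof -
    obtain i where i: "i < n" "v $ i \<noteq> 0" using v by (metis eq_vecI carrier_vecD index_zero_vec(1,2))
    have "ip n y y \<noteq> 0" using ip_zero[of n y i] i unfolding y_def by auto
    thus ?thesis using ip_nonneg[of n y] by linarith
  qed
  ultimately show ?thesis by blast
qed



lemma ip_scale1: "ip n (\<lambda>i. c * x i) y = c * ip n x y"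
  unfolding ip_def by (simp add: sum_distrib_left mult.assoc)
lemma ip_scale2: "ip n x (\<lambda>i. c * y i) = c * ip n x y"
  unfolding ip_def by (simp add: sum_distrib_left mult.left_commute)
lemma ip_div1: "ip n (\<lambda>i. x i / c) y = ip n x y / c"
  unfolding ip_def by (simp add: sum_divide_distrib)
lemma mv_scale: "mv n A (\<lambda>i. c * x i) = (\<lambda>i. c * mv n A x i)"
  unfolding mv_def by (auto simp: sum_distrib_left mult.left_commute)
lemma qf_scale: "qf n A (\<lambda>i. c * x i) = c^2 * qf n A x"
  unfolding qf_def mv_scale ip_scale1 ip_scale2 by (simp add: power2_eq_square)

lemma qf_expand: "qf n A x = (\<Sum>i<n. \<Sum>j<n. x i * A $$ (i,j) * x j)"
  unfolding qf_def ip_def mv_def by (simp add: sum_distrib_left mult.assoc)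

lemma qf_cong: "(\<And>i. i < n \<Longrightarrow> x i = x' i) \<Longrightarrow> qf n A x = qf n A x'"
  unfolding qf_expand by (intro sum.cong) auto

lemma cont_coord: "continuous_on S (\<lambda>x::nat\<Rightarrow>real. x i)"
  by (rule continuous_on_subset[OF continuous_on_product_coordinates]) simp

lemma cont_ip: "continuous_on S (\<lambda>x. ip n x (y::nat\<Rightarrow>real))"
  unfolding ip_def by (intro continuous_on_sum continuous_on_mult cont_coord continuous_on_const)
lemma cont_ip2: "continuous_on S (\<lambda>x. ip n x x)"
  unfolding ip_def by (intro continuous_on_sum continuous_on_mult cont_coord continuous_on_const)
lemma cont_qf: "continuous_on S (\<lambda>x. qf n A x)"
  unfolding qf_expand by (intro continuous_on_sum continuous_on_mult cont_coord continuous_on_const)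

lemma sq_le_ip: "i < n \<Longrightarrow> x i * x i \<le> ip n x x"
  unfolding ip_def by (rule member_le_sum) auto

lemma min_exists:
  assumes "m < n"
  shows "\<exists>x0. supp n x0 \<and> ip n x0 x0 = 1 \<and> (\<forall>j<m. ip n x0 (vs j) = 0) \<and>
     (\<forall>x. supp n x \<and> (\<forall>j<m. ip n x (vs j) = 0) \<longrightarrow> qf n A x0 * ip n x x \<le> qf n A x)"
proof -
  define S where "S = (\<lambda>i::nat. if i < n then {-1..1::real} else {0})"
  define K where "K = PiE UNIV S \<inter> {x. ip n x x = 1} \<inter> (\<Inter>j\<in>{..<m}. {x. ip n x (vs j) = 0})"
  have cS: "compact (PiE UNIV S)"
    using compactin_PiE[of "\<lambda>i. euclidean" UNIV S]
    by (simp add: euclidean_product_topology S_def)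
  have c1: "closed {x::nat\<Rightarrow>real. ip n x x = 1}"
    by (rule closed_Collect_eq) (auto intro: cont_ip2 continuous_on_const)
  have c2: "closed (\<Inter>j\<in>{..<m}. {x::nat\<Rightarrow>real. ip n x (vs j) = 0})"
    by (intro closed_INT ballI closed_Collect_eq) (auto intro: cont_ip continuous_on_const)
  have cK: "compact K" unfolding K_def Int_assoc
    by (intro compact_Int_closed cS closed_Int c1 c2)
  have memK: "x \<in> K" if "supp n x" "ip n x x = 1" "\<forall>j<m. ip n x (vs j) = 0" for x
  proof -
    have "x i \<in> S i" for i
    proof (cases "i < n")
      case True
      have "x i * x i \<le> 1" using sq_le_ip[OF True, of x] that by simp
      hence "\<bar>x i\<bar> \<le> 1" using abs_square_le_1[of "x i"] by (simp add: power2_eq_square)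
      thus ?thesis using True by (auto simp: S_def)
    next
      case False thus ?thesis using that(1) by (auto simp: S_def supp_def)
    qed
    thus ?thesis using that unfolding K_def by auto
  qed
  have normalize: "supp n (\<lambda>i. x i / sqrt (ip n x x)) \<and> ip n (\<lambda>i. x i / sqrt (ip n x x)) (\<lambda>i. x i / sqrt (ip n x x)) = 1
     \<and> (\<forall>j<m. ip n (\<lambda>i. x i / sqrt (ip n x x)) (vs j) = 0)"
    if "supp n x" "ip n x x > 0" "\<forall>j<m. ip n x (vs j) = 0" for x
  proof -
    let ?c = "1 / sqrt (ip n x x)"
    have e: "(\<lambda>i. x i / sqrt (ip n x x)) = (\<lambda>i. ?c * x i)" by auto
    have "ip n (\<lambda>i. ?c * x i) (\<lambda>i. ?c * x i) = ?c * ?c * ip n x x"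
      unfolding ip_scale1 ip_scale2 by simp
    also have "\<dots> = 1" using that(2) by (simp add: real_sqrt_mult[symmetric])
    finally show ?thesis unfolding e[symmetric] using that by (auto simp: supp_def ip_div1)
  qed
  obtain y where y: "supp n y" "\<forall>j<m. ip n y (vs j) = 0" "ip n y y > 0"
    using homog_solution[OF assms] by blast
  have "(\<lambda>i. y i / sqrt (ip n y y)) \<in> K"
    using normalize[OF y(1,3,2)] by (intro memK) auto
  hence "K \<noteq> {}" by blast
  then obtain x0 where x0: "x0 \<in> K" "\<forall>x\<in>K. qf n A x0 \<le> qf n A x"
    using continuous_attains_inf[OF cK _ cont_qf] by blast
  have x0p: "supp n x0" "ip n x0 x0 = 1" "\<forall>j<m. ip n x0 (vs j) = 0"
    using x0(1) unfolding K_def S_def supp_def by (auto simp: PiE_iff split: if_splits) (meson not_less)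
  have "qf n A x0 * ip n x x \<le> qf n A x" if "supp n x" "\<forall>j<m. ip n x (vs j) = 0" for x
  proof (cases "ip n x x > 0")
    case True
    let ?c = "1 / sqrt (ip n x x)"
    have "(\<lambda>i. x i / sqrt (ip n x x)) \<in> K" using normalize[OF that(1) True that(2)] by (intro memK) auto
    hence "qf n A x0 \<le> qf n A (\<lambda>i. ?c * x i)" using x0(2) by auto
    also have "\<dots> = qf n A x / ip n x x" unfolding qf_scale using True
      by (simp add: power_divide)
    finally show ?thesis using True by (simp add: pos_le_divide_eq)
  next
    case False
    hence "ip n x x = 0" using ip_nonneg[of n x] by linarith
    hence z: "\<And>i. i < n \<Longrightarrow> x i = 0" using ip_zero by blast
    have "qf n A x = 0" unfolding qf_expand using z by simp
    thus ?thesis using \<open>ip n x x = 0\<close> by simp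
  qed
  thus ?thesis using x0p by blast
qed



lemma quad0:
  fixes R c :: real
  assumes "\<And>t. 0 \<le> 2*t*R + t^2 * c"
  shows "R = 0"
proof -
  define t where "t = - R / (\<bar>c\<bar> + 1)"
  have p: "\<bar>c\<bar> + 1 > 0" by simp
  have "0 \<le> 2*t*R + t^2 * c" by (rule assms)
  hence "0 \<le> (2*t*R + t^2 * c) * (\<bar>c\<bar> + 1)^2" by simp
  also have "(2*t*R + t^2 * c) * (\<bar>c\<bar> + 1)^2 = 2*R*(t*(\<bar>c\<bar> + 1))*(\<bar>c\<bar> + 1) + (t*(\<bar>c\<bar> + 1))^2 * c"
    by (simp add: algebra_simps power2_eq_square)
  also have "t*(\<bar>c\<bar> + 1) = -R" unfolding t_def using p by simp
  also have "2*R*(-R)*(\<bar>c\<bar> + 1) + (-R)^2 * c = R^2 * (c - 2*\<bar>c\<bar> - 2)"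
    by (simp add: algebra_simps power2_eq_square)
  finally have "0 \<le> R^2 * (c - 2*\<bar>c\<bar> - 2)" .
  moreover have "c - 2*\<bar>c\<bar> - 2 < 0" by linarith
  ultimately have "R^2 \<le> 0" by (simp add: mult_le_0_iff zero_le_mult_iff)
  thus ?thesis by simp
qed

lemma min_eigen:
  assumes sym: "symm n A" and x0: "supp n x0" "ip n x0 x0 = 1" "\<forall>j<m. ip n x0 (vs j) = 0"
    and H: "\<forall>x. supp n x \<and> (\<forall>j<m. ip n x (vs j) = 0) \<longrightarrow> qf n A x0 * ip n x x \<le> qf n A x"
    and eig: "\<forall>j<m. \<forall>i<n. mv n A (vs j) i = d j * vs j i"
  shows "\<forall>i<n. mv n A x0 i = qf n A x0 * x0 i"
proof -
  define l where "l = qf n A x0"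
  define r where "r = (\<lambda>i. if i < n then mv n A x0 i - l * x0 i else 0)"
  have sr: "supp n r" unfolding supp_def r_def by auto
  have rv: "ip n r (vs j) = 0" if j: "j < m" for j
  proof -
    have "ip n r (vs j) = ip n (\<lambda>i. 1 * mv n A x0 i + (-l) * x0 i) (vs j)"
      by (rule ip_cong) (auto simp: r_def)
    also have "\<dots> = ip n (mv n A x0) (vs j) - l * ip n x0 (vs j)" unfolding ip_lin by simp
    also have "ip n (mv n A x0) (vs j) = ip n x0 (mv n A (vs j))" using selfadj[OF sym] by simp
    also have "\<dots> = ip n x0 (\<lambda>i. d j * vs j i)" by (rule ip_cong) (use eig j in auto)
    also have "\<dots> = 0" using x0(3) j by (simp add: ip_scale2)
    finally show ?thesis using x0(3) j by simp
  qed
  have RR: "ip n r r = ip n r (mv n A x0) - l * ip n r x0"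
  proof -
    have "ip n r r = ip n r (\<lambda>i. 1 * mv n A x0 i + (-l) * x0 i)"
      by (rule ip_cong) (auto simp: r_def)
    thus ?thesis unfolding ip_lin2 by simp
  qed
  have sa: "ip n x0 (mv n A r) = ip n r (mv n A x0)"
    using selfadj[OF sym, of x0 r] by (simp add: ip_sym)
  have ineq: "0 \<le> 2*t*ip n r r + t^2 * (qf n A r - l * ip n r r)" for t
  proof -
    define x where "x = (\<lambda>i. 1 * x0 i + t * r i)"
    have "supp n x" using x0(1) sr unfolding supp_def x_def by auto
    moreover have "\<forall>j<m. ip n x (vs j) = 0" unfolding x_def ip_lin using x0(3) rv by simp
    ultimately have h: "l * ip n x x \<le> qf n A x" using H unfolding l_def by blast
    have q1: "qf n A x = l + 2 * t * ip n r (mv n A x0) + t^2 * qf n A r"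
      unfolding qf_def x_def mv_lin ip_lin ip_lin2 sa l_def
      by (simp add: qf_def power2_eq_square algebra_simps)
    have q2: "ip n x x = 1 + 2 * t * ip n r x0 + t^2 * ip n r r"
      unfolding x_def ip_lin ip_lin2 using x0(2)
      by (simp add: power2_eq_square algebra_simps ip_sym[of n r x0])
    have q3: "2*t*ip n r r + t^2 * (qf n A r - l * ip n r r) =
       (l + 2 * t * ip n r (mv n A x0) + t^2 * qf n A r) - l * (1 + 2 * t * ip n r x0 + t^2 * ip n r r)"
      by (subst (1) RR) (simp add: algebra_simps)
    show ?thesis unfolding q3 using h unfolding q1 q2 by linarith
  qed
  have "ip n r r = 0" by (rule quad0[OF ineq])
  hence "\<And>i. i < n \<Longrightarrow> r i = 0" using ip_zero by blast
  thus ?thesis unfolding r_def l_def by auto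
qed

lemma spec_ind:
  assumes sym: "symm n A"
  shows "m \<le> n \<Longrightarrow> \<exists>v d. (\<forall>k<m. supp n (v k)) \<and>
     (\<forall>k<m. \<forall>l<m. ip n (v k) (v l) = (if k = l then 1 else 0)) \<and>
     (\<forall>k<m. \<forall>i<n. mv n A (v k) i = d k * v k i) \<and>
     (\<forall>k<m. \<forall>x. supp n x \<and> (\<forall>j<k. ip n x (v j) = 0) \<longrightarrow> d k * ip n x x \<le> qf n A x) \<and>
     (\<forall>k<m. d k = qf n A (v k))"
proof (induction m)
  case 0
  show ?case by auto
next
  case (Suc m)
  then obtain v d where IH: "\<forall>k<m. supp n (v k)"
     "\<forall>k<m. \<forall>l<m. ip n (v k) (v l) = (if k = l then 1 else 0)"
     "\<forall>k<m. \<forall>i<n. mv n A (v k) i = d k * v k i"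
     "\<forall>k<m. \<forall>x. supp n x \<and> (\<forall>j<k. ip n x (v j) = 0) \<longrightarrow> d k * ip n x x \<le> qf n A x"
     "\<forall>k<m. d k = qf n A (v k)" by auto
  have mn: "m < n" using Suc by auto
  obtain x0 where x0: "supp n x0" "ip n x0 x0 = 1" "\<forall>j<m. ip n x0 (v j) = 0"
     "\<forall>x. supp n x \<and> (\<forall>j<m. ip n x (v j) = 0) \<longrightarrow> qf n A x0 * ip n x x \<le> qf n A x"
    using min_exists[OF mn, of v A] by blast
  have e0: "\<forall>i<n. mv n A x0 i = qf n A x0 * x0 i"
    by (rule min_eigen[OF sym x0(1,2,3) x0(4) IH(3)])
  define v' where "v' = v(m := x0)"
  define d' where "d' = d(m := qf n A x0)"
  have A: "\<forall>k<Suc m. supp n (v' k)" using IH(1) x0(1) by (auto simp: v'_def less_Suc_eq)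
  have B: "\<forall>k<Suc m. \<forall>l<Suc m. ip n (v' k) (v' l) = (if k = l then 1 else 0)"
  proof (intro allI impI)
    fix k l assume k: "k < Suc m" and l: "l < Suc m"
    show "ip n (v' k) (v' l) = (if k = l then 1 else 0)"
    proof (cases "k = m")
      case True
      thus ?thesis using x0(2,3) l by (cases "l = m") (auto simp: v'_def)
    next
      case False
      hence km: "k < m" using k by auto
      show ?thesis
      proof (cases "l = m")
        case True
        have "ip n (v k) x0 = 0" using x0(3) km by (subst ip_sym) simp
        thus ?thesis using True False by (simp add: v'_def)
      next
        case False
        thus ?thesis using IH(2) km l \<open>k \<noteq> m\<close> by (simp add: v'_def)
      qed
    qed
  qed
  have C: "\<forall>k<Suc m. \<forall>i<n. mv n A (v' k) i = d' k * v' k i"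
    using IH(3) e0 by (auto simp: v'_def d'_def less_Suc_eq)
  have D: "\<forall>k<Suc m. \<forall>x. supp n x \<and> (\<forall>j<k. ip n x (v' j) = 0) \<longrightarrow> d' k * ip n x x \<le> qf n A x"
  proof (intro allI impI)
    fix k x assume k: "k < Suc m" and h: "supp n x \<and> (\<forall>j<k. ip n x (v' j) = 0)"
    show "d' k * ip n x x \<le> qf n A x"
    proof (cases "k = m")
      case True
      have "\<forall>j<m. ip n x (v j) = 0" using h True by (auto simp: v'_def)
      thus ?thesis using x0(4) h True by (auto simp: d'_def)
    next
      case False
      hence "k < m" using k by auto
      moreover have "\<forall>j<k. ip n x (v j) = 0" using h \<open>k < m\<close> by (auto simp: v'_def)
      ultimately show ?thesis using IH(4) h False by (auto simp: d'_def)
    qed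
  qed
  have E: "\<forall>k<Suc m. d' k = qf n A (v' k)" using IH(5) by (auto simp: v'_def d'_def less_Suc_eq)
  show ?case using A B C D E by blast
qed



lemma proots_linear_prod: "proots (\<Prod>a\<leftarrow>xs. [:- a, 1:]) = mset (xs :: real list)"
proof (induction xs)
  case Nil thus ?case by simp
next
  case (Cons a xs)
  have "(\<Prod>a\<leftarrow>a # xs. [:- a, 1:]) = [:- a, 1:] * (\<Prod>a\<leftarrow>xs. [:- a, 1:])" by simp
  moreover have "(\<Prod>a\<leftarrow>xs. [:- a, 1:]) \<noteq> 0" by (auto simp: prod_list_zero_iff)
  ultimately have "proots (\<Prod>a\<leftarrow>a # xs. [:- a, 1:]) = proots [:- a, 1:] + proots (\<Prod>a\<leftarrow>xs. [:- a, 1:])"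
    by (simp only: proots_mult[of "[:- a, 1:]"]) (rule proots_mult, auto)
  moreover have "proots [:- a, 1:] = {#a#}" using proots_linear_factor[of "-a"] by simp
  ultimately show ?case using Cons by simp
qed

lemma spectral:
  assumes A: "A \<in> carrier_mat n n" and sym: "symm n A"
  shows "\<exists>v d. (\<forall>k<n. supp n (v k)) \<and>
     (\<forall>k<n. \<forall>l<n. ip n (v k) (v l) = (if k = l then 1 else 0)) \<and>
     (\<forall>k<n. \<forall>i<n. mv n A (v k) i = d k * v k i) \<and>
     (\<forall>k<n. \<forall>x. supp n x \<and> (\<forall>j<k. ip n x (v j) = 0) \<longrightarrow> d k * ip n x x \<le> qf n A x) \<and>
     sorted_list_of_multiset (proots (char_poly A)) = map d [0..<n]"
proof -
  obtain v d where H: "\<forall>k<n. supp n (v k)"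
     "\<forall>k<n. \<forall>l<n. ip n (v k) (v l) = (if k = l then 1 else 0)"
     "\<forall>k<n. \<forall>i<n. mv n A (v k) i = d k * v k i"
     "\<forall>k<n. \<forall>x. supp n x \<and> (\<forall>j<k. ip n x (v j) = 0) \<longrightarrow> d k * ip n x x \<le> qf n A x"
     "\<forall>k<n. d k = qf n A (v k)"
    using spec_ind[OF sym, of n] by auto
  define P where "P = mat n n (\<lambda>(i,k). v k i)"
  define D where "D = mat n n (\<lambda>(i,j). if i = j then d i else 0)"
  have P: "P \<in> carrier_mat n n" and D: "D \<in> carrier_mat n n" and Pt: "P\<^sup>T \<in> carrier_mat n n"
    unfolding P_def D_def by auto
  have PtP: "P\<^sup>T * P = 1\<^sub>m n"
  proof (rule eq_matI)
    fix k l assume k: "k < dim_row (1\<^sub>m n)" and l: "l < dim_col (1\<^sub>m n)"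
    have "(P\<^sup>T * P) $$ (k,l) = ip n (v k) (v l)"
      using k l unfolding P_def by (simp add: scalar_prod_def ip_def atLeast0LessThan)
    thus "(P\<^sup>T * P) $$ (k,l) = 1\<^sub>m n $$ (k,l)" using H(2) k l by simp
  qed (auto simp: P_def)
  have PPt: "P * P\<^sup>T = 1\<^sub>m n" by (rule mat_mult_left_right_inverse[OF Pt P PtP])
  have AP: "A * P = P * D"
  proof (rule eq_matI)
    fix i k assume i: "i < dim_row (P * D)" and k: "k < dim_col (P * D)"
    have "(A * P) $$ (i,k) = mv n A (v k) i"
      using i k A unfolding P_def D_def mv_def by (simp add: scalar_prod_def atLeast0LessThan)
    also have "\<dots> = d k * v k i" using H(3) i k P D by auto
    also have "\<dots> = (P * D) $$ (i,k)"
    proof -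
      have "(P * D) $$ (i,k) = (\<Sum>j\<in>{0..<n}. v j i * (if j = k then d j else 0))"
        using i k P D unfolding P_def D_def by (simp add: scalar_prod_def)
      also have "\<dots> = v k i * d k" using k P D
        by (simp add: if_distrib[of "\<lambda>x. v _ i * x"] sum.delta cong: if_cong)
      finally show ?thesis by simp
    qed
    finally show "(A * P) $$ (i,k) = (P * D) $$ (i,k)" .
  qed (use A P D in auto)
  have "A = A * (P * P\<^sup>T)" using A by (simp add: PPt)
  also have "\<dots> = (A * P) * P\<^sup>T" using A P Pt by (simp add: assoc_mult_mat)
  also have "\<dots> = P * D * P\<^sup>T" unfolding AP ..
  finally have "similar_mat_wit A D P (P\<^sup>T)"
    unfolding similar_mat_wit_def using A P D Pt PPt PtP by (auto simp: Let_def)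
  hence "char_poly A = char_poly D" by (intro char_poly_similar) (auto simp: similar_mat_def)
  also have "\<dots> = (\<Prod>a\<leftarrow>diag_mat D. [:- a, 1:])"
    by (rule char_poly_upper_triangular[OF D]) (auto simp: D_def)
  also have "diag_mat D = map d [0..<n]" unfolding diag_mat_def D_def by auto
  finally have cpe: "char_poly A = (\<Prod>a\<leftarrow>map d [0..<n]. [:- a, 1:])" .
  have cp: "proots (char_poly A) = mset (map d [0..<n])" by (simp only: cpe proots_linear_prod)
  have mono: "d k \<le> d l" if "k \<le> l" "l < n" for k l
  proof -
    have "\<forall>j<k. ip n (v l) (v j) = 0" using H(2) that by auto
    hence "d k * ip n (v l) (v l) \<le> qf n A (v l)"
      using H(4)[rule_format, of k "v l"] that H(1) by auto
    thus ?thesis using H(2) H(5) that by auto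
  qed
  have "sorted (map d [0..<n])" unfolding sorted_iff_nth_mono_less using mono by auto
  hence "sorted_list_of_multiset (proots (char_poly A)) = map d [0..<n]"
    unfolding cp sorted_list_of_multiset_mset by (rule sorted_sort_id)
  thus ?thesis using H by blast
qed



definition Pr :: "nat \<Rightarrow> (nat \<times> nat) set" where
  "Pr n = {(i,j). i < j \<and> j < n}"
definition coef :: "(nat \<Rightarrow> real) \<Rightarrow> (nat \<Rightarrow> real) \<Rightarrow> nat \<times> nat \<Rightarrow> real" where
  "coef x y p = x (fst p) * y (snd p) + x (snd p) * y (fst p)"
definition Lf :: "nat \<Rightarrow> (nat \<Rightarrow> real) \<Rightarrow> (nat \<Rightarrow> real) \<Rightarrow> (nat \<times> nat \<Rightarrow> real) \<Rightarrow> real" where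
  "Lf n x y Y = (\<Sum>p\<in>Pr n. Y p * coef x y p)"

lemma finite_Pr[simp]: "finite (Pr n)"
  by (rule finite_subset[of _ "{..<n} \<times> {..<n}"]) (auto simp: Pr_def)

lemma Pr_Suc: "Pr (Suc n) = Pr n \<union> (\<lambda>i. (i,n)) ` {..<n}"
  unfolding Pr_def by auto

lemma double_sum_split:
  "(\<Sum>i<n. \<Sum>j<n. f i j) = (\<Sum>i<n. f i i) + (\<Sum>p\<in>Pr n. f (fst p) (snd p) + f (snd p) (fst p))"
proof (induction n)
  case 0 thus ?case by (simp add: Pr_def)
next
  case (Suc n)
  have d: "Pr n \<inter> (\<lambda>i. (i,n)) ` {..<n} = {}" by (auto simp: Pr_def)
  have "(\<Sum>p\<in>Pr (Suc n). f (fst p) (snd p) + f (snd p) (fst p)) =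
        (\<Sum>p\<in>Pr n. f (fst p) (snd p) + f (snd p) (fst p)) + (\<Sum>i<n. f i n + f n i)"
    unfolding Pr_Suc by (subst sum.union_disjoint) (use d in \<open>auto simp: sum.reindex inj_on_def\<close>)
  moreover have "(\<Sum>i<Suc n. \<Sum>j<Suc n. f i j) = (\<Sum>i<n. \<Sum>j<n. f i j) + (\<Sum>i<n. f i n + f n i) + f n n"
    by (simp add: sum.distrib algebra_simps)
  ultimately show ?case using Suc by (simp add: algebra_simps)
qed

lemma coef_sym: "coef x y p = coef y x p"
  unfolding coef_def by simp

lemma Lf_sym: "Lf n x y Y = Lf n y x Y"
  unfolding Lf_def using coef_sym by metis

lemma Lf_expand: "Lf n (\<lambda>i. a * u i + b * w i) (\<lambda>i. a * u i + b * w i) Y =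
   a^2 * Lf n u u Y + 2 * a * b * Lf n u w Y + b^2 * Lf n w w Y"
proof -
  have "coef (\<lambda>i. a * u i + b * w i) (\<lambda>i. a * u i + b * w i) p =
        a^2 * coef u u p + 2 * a * b * coef u w p + b^2 * coef w w p" for p
    unfolding coef_def by (simp add: algebra_simps power2_eq_square)
  hence "Lf n (\<lambda>i. a * u i + b * w i) (\<lambda>i. a * u i + b * w i) Y =
     (\<Sum>p\<in>Pr n. a^2 * (Y p * coef u u p) + 2 * a * b * (Y p * coef u w p) + b^2 * (Y p * coef w w p))"
    unfolding Lf_def by (intro sum.cong) (auto simp: algebra_simps)
  thus ?thesis unfolding Lf_def by (simp add: sum.distrib sum_distrib_left)
qed

lemma Lf_lin: "Lf n x y (\<lambda>p. Y p + t * D p) = Lf n x y Y + t * Lf n x y D"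
  unfolding Lf_def by (simp add: sum.distrib sum_distrib_left algebra_simps)

lemma Lf_cong: "(\<And>p. p \<in> Pr n \<Longrightarrow> Y p = Y' p) \<Longrightarrow> Lf n x y Y = Lf n x y Y'"
  unfolding Lf_def by (intro sum.cong) auto

lemma qf_pairs:
  assumes "symm n M"
  shows "qf n M x = Lf n x x (\<lambda>p. M $$ p) + (\<Sum>i<n. M $$ (i,i) * (x i * x i))"
proof -
  have "qf n M x = (\<Sum>i<n. \<Sum>j<n. x i * M $$ (i,j) * x j)"
    unfolding qf_def ip_def mv_def by (simp add: sum_distrib_left mult.assoc)
  also have "\<dots> = (\<Sum>i<n. x i * M $$ (i,i) * x i) +
     (\<Sum>p\<in>Pr n. x (fst p) * M $$ (fst p, snd p) * x (snd p) + x (snd p) * M $$ (snd p, fst p) * x (fst p))"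
    by (rule double_sum_split)
  also have "(\<Sum>p\<in>Pr n. x (fst p) * M $$ (fst p, snd p) * x (snd p) + x (snd p) * M $$ (snd p, fst p) * x (fst p))
     = Lf n x x (\<lambda>p. M $$ p)"
    unfolding Lf_def coef_def using assms unfolding symm_def
    by (intro sum.cong) (auto simp: Pr_def algebra_simps)
  finally show ?thesis by (simp add: algebra_simps)
qed

lemma kernel_fin:
  fixes c :: "nat \<Rightarrow> 'a \<Rightarrow> real"
  assumes F: "finite F" and card: "m < card F"
  shows "\<exists>D. (\<forall>p. p \<notin> F \<longrightarrow> D p = 0) \<and> (\<forall>j<m. (\<Sum>p\<in>F. D p * c j p) = 0) \<and> (\<exists>p\<in>F. D p \<noteq> 0)"
proof -
  obtain h where h: "bij_betw h {0..<card F} F" using ex_bij_betw_nat_finite[OF F] by blast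
  obtain y where y: "supp (card F) y" "\<forall>j<m. ip (card F) y (\<lambda>k. c j (h k)) = 0" "ip (card F) y y > 0"
    using homog_solution[OF card, of "\<lambda>j k. c j (h k)"] by blast
  define g where "g = inv_into {0..<card F} h"
  define D where "D = (\<lambda>p. if p \<in> F then y (g p) else 0)"
  have gh: "g (h k) = k" if "k < card F" for k
    unfolding g_def using h that by (simp add: bij_betw_def inv_into_f_f)
  have Dh: "D (h k) = y k" if "k < card F" for k
    using that h gh unfolding D_def by (auto simp: bij_betw_def)
  have "(\<Sum>p\<in>F. D p * c j p) = 0" if j: "j < m" for j
  proof -
    have "(\<Sum>p\<in>F. D p * c j p) = (\<Sum>k\<in>{0..<card F}. D (h k) * c j (h k))"
      using sum.reindex_bij_betw[OF h, of "\<lambda>p. D p * c j p"] by simp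
    also have "\<dots> = ip (card F) y (\<lambda>k. c j (h k))" unfolding ip_def
      by (simp add: Dh atLeast0LessThan)
    finally show ?thesis using y(2) j by simp
  qed
  moreover have "\<exists>p\<in>F. D p \<noteq> 0"
  proof (rule ccontr)
    assume "\<not> ?thesis"
    have "y k = 0" if "k < card F" for k
    proof -
      have "h k \<in> F" using h that by (auto simp: bij_betw_def)
      thus ?thesis using Dh[OF that] \<open>\<not> (\<exists>p\<in>F. D p \<noteq> 0)\<close> by auto
    qed
    hence "ip (card F) y y = 0" unfolding ip_def by simp
    thus False using y(3) by simp
  qed
  ultimately show ?thesis by (intro exI[of _ D]) (auto simp: D_def)
qed

lemma hit:
  fixes Y D :: "'a \<Rightarrow> real"
  assumes F: "finite F" and Y: "\<forall>p\<in>F. 0 < Y p \<and> Y p < 1" and D: "\<exists>p\<in>F. D p \<noteq> 0"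
  shows "\<exists>t. (\<forall>p\<in>F. 0 \<le> Y p + t * D p \<and> Y p + t * D p \<le> 1) \<and>
             (\<exists>p\<in>F. Y p + t * D p = 0 \<or> Y p + t * D p = 1)"
proof -
  define G where "G = {p\<in>F. D p \<noteq> 0}"
  define h where "h = (\<lambda>p. if D p > 0 then (1 - Y p) / D p else - Y p / D p)"
  have G: "finite G" "G \<noteq> {}" using F D unfolding G_def by auto
  have hpos: "h p > 0" if "p \<in> G" for p
  proof -
    have "D p < 0 \<or> D p > 0" and "0 < Y p" "Y p < 1" using that Y unfolding G_def by auto
    thus ?thesis unfolding h_def by (auto simp: divide_pos_neg)
  qed
  define t where "t = Min (h ` G)"
  have tle: "t \<le> h p" if "p \<in> G" for p unfolding t_def using G that by auto
  have tin: "t \<in> h ` G" unfolding t_def using G by auto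
  have t0: "t > 0" using tin hpos by auto
  have "0 \<le> Y p + t * D p \<and> Y p + t * D p \<le> 1" if p: "p \<in> F" for p
  proof (cases "D p = 0")
    case True thus ?thesis using Y p by auto
  next
    case False
    hence pG: "p \<in> G" unfolding G_def using p by auto
    show ?thesis
    proof (cases "D p > 0")
      case True
      have "t * D p \<le> h p * D p" using tle[OF pG] True by (simp add: mult_right_mono)
      also have "h p * D p = 1 - Y p" unfolding h_def using True by simp
      finally show ?thesis using True t0 Y p by (auto intro: mult_nonneg_nonneg)
    next
      case False
      hence neg: "D p < 0" using \<open>D p \<noteq> 0\<close> by simp
      have "h p * D p \<le> t * D p" using tle[OF pG] neg by (simp add: mult_right_mono_neg)
      moreover have "h p * D p = - Y p" unfolding h_def using neg by simp
      moreover have "t * D p \<le> 0" using mult_pos_neg[OF t0 neg] by simp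
      ultimately show ?thesis using Y p by auto
    qed
  qed
  moreover obtain q where q: "q \<in> G" "t = h q" using tin by auto
  have "Y q + t * D q = 0 \<or> Y q + t * D q = 1"
    using q unfolding h_def G_def by (auto split: if_splits)
  moreover have "q \<in> F" using q unfolding G_def by auto
  ultimately show ?thesis by blast
qed



definition feas :: "nat \<Rightarrow> (nat \<Rightarrow> real) \<Rightarrow> (nat \<Rightarrow> real) \<Rightarrow> (nat \<times> nat \<Rightarrow> real) \<Rightarrow> (nat \<times> nat \<Rightarrow> real) \<Rightarrow> bool" where
  "feas n u w Y0 Y = ((\<forall>p\<in>Pr n. 0 \<le> Y p \<and> Y p \<le> 1) \<and> Lf n u u Y = Lf n u u Y0 \<and>
     Lf n u w Y = Lf n u w Y0 \<and> Lf n w w Y = Lf n w w Y0)"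
definition fr :: "nat \<Rightarrow> (nat \<times> nat \<Rightarrow> real) \<Rightarrow> (nat \<times> nat) set" where
  "fr n Y = {p\<in>Pr n. 0 < Y p \<and> Y p < 1}"

lemma finite_fr[simp]: "finite (fr n Y)"
  by (rule finite_subset[of _ "Pr n"]) (auto simp: fr_def)

lemma Lf_support:
  assumes "F \<subseteq> Pr n" "\<forall>p. p \<notin> F \<longrightarrow> D p = 0"
  shows "Lf n x y D = (\<Sum>p\<in>F. D p * coef x y p)"
  unfolding Lf_def using assms by (intro sum.mono_neutral_right) auto

lemma vertex:
  assumes "feas n u w Y0 Y0"
  shows "\<exists>Y. feas n u w Y0 Y \<and> card (fr n Y) \<le> 3"
proof -
  obtain Y where Y: "feas n u w Y0 Y" and minY: "\<forall>Z. feas n u w Y0 Z \<longrightarrow> card (fr n Y) \<le> card (fr n Z)"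
    using ex_has_least_nat[of "feas n u w Y0" Y0 "\<lambda>Y. card (fr n Y)"] assms by blast
  have "card (fr n Y) \<le> 3"
  proof (rule ccontr)
    assume "\<not> card (fr n Y) \<le> 3"
    hence "4 \<le> card (fr n Y)" by simp
    then obtain F where F: "F \<subseteq> fr n Y" "card F = 4" "finite F"
      using obtain_subset_with_card_n by metis
    define c where "c = (\<lambda>j p. if j = (0::nat) then coef u u p else if j = 1 then coef u w p else coef w w p)"
    obtain D where D: "\<forall>p. p \<notin> F \<longrightarrow> D p = 0" "\<forall>j<3. (\<Sum>p\<in>F. D p * c j p) = 0" "\<exists>p\<in>F. D p \<noteq> 0"
      using kernel_fin[OF F(3), of 3 c] F(2) by auto
    have FY: "\<forall>p\<in>F. 0 < Y p \<and> Y p < 1" using F(1) by (auto simp: fr_def)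
    obtain t where t: "\<forall>p\<in>F. 0 \<le> Y p + t * D p \<and> Y p + t * D p \<le> 1"
       "\<exists>p\<in>F. Y p + t * D p = 0 \<or> Y p + t * D p = 1"
      using hit[OF F(3) FY D(3)] by blast
    define Z where "Z = (\<lambda>p. Y p + t * D p)"
    have FP: "F \<subseteq> Pr n" using F(1) by (auto simp: fr_def)
    have L0: "Lf n u u D = 0" "Lf n u w D = 0" "Lf n w w D = 0"
      using D(2) Lf_support[OF FP D(1)] unfolding c_def
      by (auto dest: spec[of _ 0] spec[of _ 1] spec[of _ 2])
    have feasZ: "feas n u w Y0 Z"
    proof -
      have "\<forall>p\<in>Pr n. 0 \<le> Z p \<and> Z p \<le> 1"
      proof
        fix p assume p: "p \<in> Pr n"
        show "0 \<le> Z p \<and> Z p \<le> 1"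
        proof (cases "p \<in> F")
          case True thus ?thesis using t(1) unfolding Z_def by auto
        next
          case False
          hence "D p = 0" using D(1) by blast
          thus ?thesis using Y p unfolding Z_def feas_def by auto
        qed
      qed
      thus ?thesis using Y L0 unfolding feas_def Z_def Lf_lin by simp
    qed
    obtain q where q: "q \<in> F" "Z q = 0 \<or> Z q = 1" using t(2) unfolding Z_def by blast
    have sub: "fr n Z \<subseteq> fr n Y - {q}"
    proof
      fix p assume p: "p \<in> fr n Z"
      show "p \<in> fr n Y - {q}"
      proof (cases "p \<in> F")
        case True thus ?thesis using F(1) p q unfolding fr_def by auto
      next
        case False
        hence "D p = 0" using D(1) by blast
        hence "Z p = Y p" unfolding Z_def by auto
        thus ?thesis using p False q unfolding fr_def by auto
      qed
    qed
    have "q \<in> fr n Y" using q F(1) by auto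
    hence "card (fr n Y - {q}) < card (fr n Y)" by (intro card_Diff1_less) auto
    hence "card (fr n Z) < card (fr n Y)" using card_mono[OF _ sub] by simp
    thus False using minY feasZ by force
  qed
  thus ?thesis using Y by blast
qed



lemma two_abs_le: "2 * \<bar>a * b\<bar> \<le> a * a + b * (b::real)"
proof -
  have "0 \<le> (a - b) * (a - b)" "0 \<le> (a + b) * (a + b)" by simp_all
  hence "2 * (a * b) \<le> a * a + b * b" "- (2 * (a * b)) \<le> a * a + b * b"
    by (simp_all add: algebra_simps)
  thus ?thesis by (simp add: abs_if split: if_splits)
qed

lemma two_le_ip: assumes "i < n" "j < n" "i \<noteq> j" shows "x i * x i + x j * x j \<le> ip n x x"
proof -
  have "x i * x i + x j * x j = (\<Sum>k\<in>{i,j}. x k * x k)" using assms by simp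
  also have "\<dots> \<le> (\<Sum>k<n. x k * x k)" using assms by (intro sum_mono2) auto
  finally show ?thesis unfolding ip_def .
qed

lemma coef_bound: assumes "p \<in> Pr n" shows "\<bar>coef x x p\<bar> \<le> ip n x x"
proof -
  obtain i j where p: "p = (i,j)" "i < j" "j < n" using assms unfolding Pr_def by auto
  have "\<bar>coef x x p\<bar> = 2 * \<bar>x i * x j\<bar>" unfolding coef_def p by (simp add: abs_mult)
  also have "\<dots> \<le> x i * x i + x j * x j" by (rule two_abs_le)
  also have "\<dots> \<le> ip n x x" using p by (intro two_le_ip) auto
  finally show ?thesis .
qed

lemma round:
  assumes n2: "n \<ge> 2" and W: "W \<in> carrier_mat n n" "symm n W"
    "\<forall>i<n. \<forall>j<n. 0 \<le> W $$ (i,j) \<and> W $$ (i,j) \<le> 1"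
  shows "\<exists>G \<in> simple_graphs n. \<forall>a b. qf n G (\<lambda>i. a * u i + b * w i) \<le>
     qf n W (\<lambda>i. a * u i + b * w i) + 2 * sqrt (real n) * ip n (\<lambda>i. a * u i + b * w i) (\<lambda>i. a * u i + b * w i)"
proof -
  define Y0 where "Y0 = (\<lambda>p. W $$ p)"
  have "feas n u w Y0 Y0" unfolding feas_def Y0_def using W(3) by (auto simp: Pr_def)
  then obtain Y where Y: "feas n u w Y0 Y" "card (fr n Y) \<le> 3" using vertex by blast
  define R where "R = (\<lambda>p. if Y p = 1 then 1 else (0::real))"
  define G where "G = mat n n (\<lambda>(i,j). if i = j then 0 else R (min i j, max i j))"
  have Gc: "G \<in> carrier_mat n n" unfolding G_def by auto
  have Gsg: "G \<in> simple_graphs n"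
  proof -
    have "G\<^sup>T = G"
      by (rule eq_matI) (auto simp: G_def min.commute max.commute)
    moreover have "\<forall>i<n. G $$ (i,i) = 0" unfolding G_def by auto
    moreover have "\<forall>i<n. \<forall>j<n. G $$ (i,j) = 0 \<or> G $$ (i,j) = 1" unfolding G_def R_def by auto
    ultimately show ?thesis using Gc unfolding simple_graphs_def by blast
  qed
  have Gsym: "symm n G" unfolding symm_def G_def by (auto simp: min.commute max.commute)
  have crd: "real (card (fr n Y)) \<le> 2 * sqrt (real n)"
  proof (cases "n = 2")
    case True
    have "fr n Y \<subseteq> {(0,1)}" unfolding fr_def Pr_def True by auto
    hence "card (fr n Y) \<le> 1" using card_mono[of "{(0::nat,1::nat)}" "fr n Y"] by simp
    hence c1: "real (card (fr n Y)) \<le> 1" by simp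
    have s1: "1 \<le> sqrt (real n)" using n2 by simp
    from c1 s1 show ?thesis by linarith
  next
    case False
    hence "3 \<le> n" using n2 by simp
    hence "(3/2)^2 \<le> real n" by (simp add: power2_eq_square)
    hence "3/2 \<le> sqrt (real n)" by (rule real_le_rsqrt)
    thus ?thesis using Y(2) by simp
  qed
  have "qf n G x \<le> qf n W x + 2 * sqrt (real n) * ip n x x"
    if x: "x = (\<lambda>i. a * u i + b * w i)" for x a b
  proof -
    have qG: "qf n G x = Lf n x x R"
    proof -
      have "qf n G x = Lf n x x (\<lambda>p. G $$ p) + (\<Sum>i<n. G $$ (i,i) * (x i * x i))"
        by (rule qf_pairs[OF Gsym])
      also have "(\<Sum>i<n. G $$ (i,i) * (x i * x i)) = 0" unfolding G_def by simp
      also have "Lf n x x (\<lambda>p. G $$ p) = Lf n x x R"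
        by (rule Lf_cong) (auto simp: G_def Pr_def)
      finally show ?thesis by simp
    qed
    have qW: "Lf n x x Y0 \<le> qf n W x"
    proof -
      have "qf n W x = Lf n x x Y0 + (\<Sum>i<n. W $$ (i,i) * (x i * x i))"
        unfolding Y0_def by (rule qf_pairs[OF W(2)])
      moreover have "(\<Sum>i<n. W $$ (i,i) * (x i * x i)) \<ge> 0"
        using W(3) by (intro sum_nonneg) auto
      ultimately show ?thesis by simp
    qed
    have eqY: "Lf n x x Y = Lf n x x Y0"
      using Y(1) unfolding x Lf_expand feas_def by simp
    define D where "D = (\<lambda>p. if p \<in> fr n Y then R p - Y p else 0)"
    have RYD: "Lf n x x R = Lf n x x Y + Lf n x x D"
    proof -
      have "Lf n x x R = Lf n x x (\<lambda>p. Y p + 1 * D p)"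
      proof (rule Lf_cong)
        fix p assume p: "p \<in> Pr n"
        show "R p = Y p + 1 * D p"
        proof (cases "p \<in> fr n Y")
          case True thus ?thesis unfolding D_def by simp
        next
          case False
          hence "Y p = 0 \<or> Y p = 1" using Y(1) p unfolding feas_def fr_def by force
          thus ?thesis using False unfolding D_def R_def by auto
        qed
      qed
      thus ?thesis unfolding Lf_lin by simp
    qed
    have "Lf n x x D = (\<Sum>p\<in>fr n Y. D p * coef x x p)"
      by (rule Lf_support) (auto simp: D_def fr_def)
    also have "\<dots> \<le> (\<Sum>p\<in>fr n Y. ip n x x)"
    proof (rule sum_mono)
      fix p assume p: "p \<in> fr n Y"
      have "\<bar>D p\<bar> \<le> 1" using p unfolding D_def R_def fr_def by auto
      moreover have "\<bar>coef x x p\<bar> \<le> ip n x x" using p by (intro coef_bound) (auto simp: fr_def)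
      ultimately have "\<bar>D p * coef x x p\<bar> \<le> 1 * ip n x x"
        unfolding abs_mult by (intro mult_mono) auto
      thus "D p * coef x x p \<le> ip n x x" by simp
    qed
    also have "\<dots> = real (card (fr n Y)) * ip n x x" by simp
    also have "\<dots> \<le> 2 * sqrt (real n) * ip n x x"
      using crd ip_nonneg[of n x] by (intro mult_right_mono) auto
    finally have "Lf n x x D \<le> 2 * sqrt (real n) * ip n x x" .
    thus ?thesis using qG qW eqY RYD by linarith
  qed
  thus ?thesis using Gsg by blast
qed



lemma lam_eq:
  assumes "sorted_list_of_multiset (proots (char_poly A)) = map d [0..<n]" "n \<ge> 2"
  shows "lambda_k A (n - 1) = d 1"
proof -
  have "lambda_k A (n - 1) = rev (map d [0..<n]) ! (n - 2)"
    unfolding lambda_k_def eigenvalues_desc_def assms(1) by (simp add: numeral_2_eq_2)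
  also have "\<dots> = map d [0..<n] ! (n - Suc (n - 2))" using assms(2) by (simp add: rev_nth)
  also have "n - Suc (n - 2) = 1" using assms(2) by simp
  finally show ?thesis using assms(2) by simp
qed

lemma finite_sg: "finite (simple_graphs n)"
proof -
  let ?I = "{..<n} \<times> {..<n}"
  have "simple_graphs n \<subseteq> (\<lambda>f. mat n n f) ` (?I \<rightarrow>\<^sub>E {0,1})"
  proof
    fix G assume G: "G \<in> simple_graphs n"
    define f where "f = restrict (\<lambda>p. G $$ p) ?I"
    have "f \<in> ?I \<rightarrow>\<^sub>E {0,1}" using G unfolding f_def simple_graphs_def by auto
    moreover have "G = mat n n f"
      using G unfolding simple_graphs_def f_def by (intro eq_matI) auto
    ultimately show "G \<in> (\<lambda>f. mat n n f) ` (?I \<rightarrow>\<^sub>E {0,1})" by blast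
  qed
  moreover have "finite (?I \<rightarrow>\<^sub>E {0::real,1})" by (intro finite_PiE) auto
  ultimately show ?thesis using finite_subset by blast
qed

lemma symm_of_transpose: "A \<in> carrier_mat n n \<Longrightarrow> A\<^sup>T = A \<Longrightarrow> symm n A"
  unfolding symm_def by (metis carrier_matD(1,2) index_transpose_mat(1))

lemma per_W:
  assumes n2: "n \<ge> 2" and W: "W \<in> weighted_graphs n"
  shows "\<exists>G \<in> simple_graphs n. lambda_k G (n - 1) \<le> lambda_k W (n - 1) + 2 * sqrt (real n)"
proof -
  have Wc: "W \<in> carrier_mat n n" and Wt: "W\<^sup>T = W" and Wr: "\<forall>i<n. \<forall>j<n. 0 \<le> W $$ (i,j) \<and> W $$ (i,j) \<le> 1"
    using W unfolding weighted_graphs_def by auto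
  have Ws: "symm n W" by (rule symm_of_transpose[OF Wc Wt])
  obtain w mu where S: "\<forall>k<n. supp n (w k)"
     "\<forall>k<n. \<forall>l<n. ip n (w k) (w l) = (if k = l then 1 else 0)"
     "\<forall>k<n. \<forall>i<n. mv n W (w k) i = mu k * w k i"
     "sorted_list_of_multiset (proots (char_poly W)) = map mu [0..<n]"
    using spectral[OF Wc Ws] by blast
  have lw: "lambda_k W (n - 1) = mu 1" by (rule lam_eq[OF S(4) n2])
  have "sorted (map mu [0..<n])" unfolding S(4)[symmetric] by simp
  hence mu01: "mu 0 \<le> mu 1" using n2 unfolding sorted_iff_nth_mono by fastforce
  define u where "u = w 0"
  define v where "v = w 1"
  have uu: "ip n u u = 1" and vv: "ip n v v = 1" and uv: "ip n u v = 0" and vu: "ip n v u = 0"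
    using S(2) n2 unfolding u_def v_def by auto
  have su: "supp n u" and sv: "supp n v" using S(1) n2 unfolding u_def v_def by auto
  have qW: "qf n W (\<lambda>i. a * u i + b * v i) \<le> mu 1 * ip n (\<lambda>i. a * u i + b * v i) (\<lambda>i. a * u i + b * v i)"
    for a b
  proof -
    let ?x = "\<lambda>i. a * u i + b * v i"
    have ix: "ip n ?x ?x = a^2 + b^2"
      unfolding ip_lin ip_lin2 uu vv uv vu by (simp add: power2_eq_square)
    have "qf n W ?x = ip n ?x (\<lambda>i. a * mv n W u i + b * mv n W v i)" unfolding qf_def mv_lin ..
    also have "\<dots> = ip n ?x (\<lambda>i. (a * mu 0) * u i + (b * mu 1) * v i)"
      by (rule ip_cong) (use S(3) n2 in \<open>auto simp: u_def v_def\<close>)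
    also have "\<dots> = (a * mu 0) * a + (b * mu 1) * b"
      unfolding ip_lin ip_lin2 uu vv uv vu by simp
    also have "\<dots> \<le> mu 1 * (a^2 + b^2)"
    proof -
      have "(a * a) * mu 0 \<le> (a * a) * mu 1" by (rule mult_left_mono[OF mu01]) simp
      thus ?thesis by (simp add: power2_eq_square algebra_simps)
    qed
    finally show ?thesis unfolding ix .
  qed
  obtain G where G: "G \<in> simple_graphs n" and
    bnd: "\<forall>a b. qf n G (\<lambda>i. a * u i + b * v i) \<le> qf n W (\<lambda>i. a * u i + b * v i) +
       2 * sqrt (real n) * ip n (\<lambda>i. a * u i + b * v i) (\<lambda>i. a * u i + b * v i)"
    using round[OF n2 Wc Ws Wr, of u v] by blast
  have Gc: "G \<in> carrier_mat n n" and Gt: "G\<^sup>T = G" using G unfolding simple_graphs_def by auto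
  have Gs: "symm n G" by (rule symm_of_transpose[OF Gc Gt])
  obtain z g where T: "\<forall>k<n. \<forall>x. supp n x \<and> (\<forall>j<k. ip n x (z j) = 0) \<longrightarrow> g k * ip n x x \<le> qf n G x"
     "sorted_list_of_multiset (proots (char_poly G)) = map g [0..<n]"
    using spectral[OF Gc Gs] by blast
  have lg: "lambda_k G (n - 1) = g 1" by (rule lam_eq[OF T(2) n2])
  define al where "al = ip n u (z 0)"
  define be where "be = ip n v (z 0)"
  obtain a b where ab: "a * al + b * be = 0" "a^2 + b^2 > 0"
  proof (cases "al = 0 \<and> be = 0")
    case True thus ?thesis using that[of 1 0] by simp
  next
    case False
    have "be * al + (- al) * be = 0" by simp
    moreover have "be^2 + (-al)^2 > 0" using False by (auto simp: sum_power2_gt_zero_iff)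
    ultimately show ?thesis using that by blast
  qed
  let ?x = "\<lambda>i. a * u i + b * v i"
  have "supp n ?x" using su sv unfolding supp_def by auto
  moreover have "\<forall>j<1. ip n ?x (z j) = 0" using ab(1) unfolding ip_lin al_def be_def by simp
  ultimately have "g 1 * ip n ?x ?x \<le> qf n G ?x" using T(1) n2 by auto
  also have "\<dots> \<le> (mu 1 + 2 * sqrt (real n)) * ip n ?x ?x"
    using bnd[rule_format, of a b] qW[of a b] by (simp add: algebra_simps)
  finally have "g 1 * ip n ?x ?x \<le> (mu 1 + 2 * sqrt (real n)) * ip n ?x ?x" .
  moreover have "ip n ?x ?x = a^2 + b^2"
    unfolding ip_lin ip_lin2 uu vv uv vu by (simp add: power2_eq_square)
  ultimately have "g 1 \<le> mu 1 + 2 * sqrt (real n)" using ab(2) by simp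
  hence "lambda_k G (n - 1) \<le> lambda_k W (n - 1) + 2 * sqrt (real n)" unfolding lg lw .
  thus ?thesis using G by blast
qed

theorem theorem1p7:
  fixes n :: nat
  assumes "n \<ge> 2"
  shows "Min ((\<lambda>G. lambda_k G (n - 1)) ` simple_graphs n) - 2 * sqrt (real n)
           \<le> (INF W \<in> weighted_graphs n. lambda_k W (n - 1))"
proof (rule cINF_greatest)
  show "weighted_graphs n \<noteq> {}"
    using zero_carrier_mat[of n n] unfolding weighted_graphs_def by (auto intro!: exI[of _ "0\<^sub>m n n"])
next
  fix W assume W: "W \<in> weighted_graphs n"
  obtain G where G: "G \<in> simple_graphs n" "lambda_k G (n - 1) \<le> lambda_k W (n - 1) + 2 * sqrt (real n)"
    using per_W[OF assms W] by blast
  have "Min ((\<lambda>G. lambda_k G (n - 1)) ` simple_graphs n) \<le> lambda_k G (n - 1)"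
    using G(1) finite_sg by (intro Min_le) auto
  thus "Min ((\<lambda>G. lambda_k G (n - 1)) ` simple_graphs n) - 2 * sqrt (real n) \<le> lambda_k W (n - 1)"
    using G(2) by linarith
qed

end
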